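(* Let $n\in\mathbb{N}$ and let $x,y\in\{0,1\}^n$ with ${\sf dist}(x,y)=1$. Then ${\sf dist}({\sf signature}(x),{\sf signature}(y))\le 3$ (Hamming distance of strings over the alphabet $\{0,1,\sqcup\}$). Consequently, writing $C_x=\{c_k,c_{k+1},\dots,c_{n-k}\}$ and $C_y=\{c'_{k'},\dots,c'_{n-k'}\}$ for the chains containing $x$ and $y$ (with $|c_j|=j$ and $|c'_{j}|=j$), we have (1) $|k-k'|\le 1$, and (2) for all $j\in[k,n-k]$ and $j'\in[k',n-k']$, ${\sf dist}(c_j,c'_{j'})\le |j-j'|+6$.
   Context: ${\sf dist}$ is Hamming distance, $|z|$ the Hamming weight. Marking: for $x\in\{0,1\}^n$, regard each $1$ as an opening parenthesis and each $0$ as a closing parenthesis; a coordinate is marked if its symbol is matched in the standard parenthesis matching (equivalently: repeatedly pick a pair of coordinates $i<i'$ with $x_i=1$, $x_{i'}=0$ that are adjacent among the currently unmarked coordinates, mark both, and continue until no such pair remains; the resulting set of marked coordinates does not depend on the choices). The unmarked coordinates of $x$, read left to right, then form a string $0\cdots01\cdots1$. The signature ${\sf signature}(x)\in\{0,1,\sqcup\}^n$ has $i$-th entry $x_i$ if coordinate $i$ is marked and $\sqcup$ otherwise. The chain $C_x$ is the set of all $y\in\{0,1\}^n$ with ${\sf signature}(y)={\sf signature}(x)$; equivalently, all strings that agree with $x$ on its marked coordinates and whose restriction to the unmarked coordinates has the form $0\cdots01\cdots1$. If $x$ has $2k$ marked coordinates, $C_x=\{c_k,\dots,c_{n-k}\}$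 where $c_j$ is the unique element of weight $j$ (this is the de Bruijn–Tengbergen–Kruyswijk symmetric chain partition). *)

theory Defs
  imports Main
begin

text \<open>Binary strings of length n are lists of booleans: True = 1 (opening parenthesis),
False = 0 (closing parenthesis); coordinates are indexed 0..n-1.\<close>

definition hdist :: "'a list \<Rightarrow> 'a list \<Rightarrow> nat" where
  "hdist x y = card {i. i < length x \<and> i < length y \<and> x ! i \<noteq> y ! i}"

definition weight :: "bool list \<Rightarrow> nat" where
  "weight x = length (filter id x)"

text \<open>Standard parenthesis matching by a left-to-right scan with a stack of positions of
unmatched opening parentheses; returns the set of matched (marked) coordinates.\<close>
fun marks :: "nat list \<Rightarrow> nat \<Rightarrow> bool list \<Rightarrow> nat set" where
  "marks st i [] = {}"
| "marks st i (True # xs) = marks (i # st) (Suc i) xs"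
| "marks [] i (False # xs) = marks [] (Suc i) xs"
| "marks (j # st) i (False # xs) = {i, j} \<union> marks st (Suc i) xs"

definition marked :: "bool list \<Rightarrow> nat set" where
  "marked x = marks [] 0 x"

text \<open>Signature over the alphabet {0,1,blank}: Some b = the bit b, None = blank.\<close>
definition signature :: "bool list \<Rightarrow> bool option list" where
  "signature x = map (\<lambda>i. if i \<in> marked x then Some (x ! i) else None) [0..<length x]"

definition chain :: "bool list \<Rightarrow> bool list set" where
  "chain x = {y. length y = length x \<and> signature y = signature x}"

definition chain_k :: "bool list \<Rightarrow> nat" where
  "chain_k x = card (marked x) div 2"

definition chain_elem :: "bool list \<Rightarrow> nat \<Rightarrow> bool list" where
  "chain_elem x j = (THE c. c \<in> chain x \<and> weight c = j)"

end

theory Submission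
  imports Defs
begin


definition E :: "bool list \<Rightarrow> nat \<Rightarrow> int" where
  "E xs t = (\<Sum>s<t. if xs!s then 1 else -1)"

lemma E_0[simp]: "E xs 0 = 0" by (simp add: E_def)
lemma E_Suc: "E xs (Suc t) = E xs t + (if xs!t then 1 else -1)" by (simp add: E_def)
lemma E_Cons_Suc[simp]: "E (b#xs) (Suc t) = (if b then 1 else -1) + E xs t"
  unfolding E_def by (subst sum.lessThan_Suc_shift) simp

definition mk :: "nat \<Rightarrow> bool list \<Rightarrow> nat \<Rightarrow> bool" where
  "mk L xs t = (if xs!t then (\<exists>t'. t<t' \<and> t' \<le> length xs \<and> E xs t' \<le> E xs t)
     else ((\<exists>t'\<le>t. E xs t' < E xs t) \<or> - int L < E xs t))"

lemma ex_le_Suc: "(\<exists>t\<le>Suc n. P t) = (P 0 \<or> (\<exists>t\<le>n. P (Suc t)))"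
  by (metis Suc_le_mono le0 not0_implies_Suc)

lemma ex_gr_Suc: "(\<exists>t'. Suc t < t' \<and> t' \<le> Suc n \<and> P t') = (\<exists>s. t < s \<and> s \<le> n \<and> P (Suc s))"
  by (metis Suc_le_mono Suc_less_eq less_imp_Suc_add)

lemma mk_True_Suc: "mk L (True#xs) (Suc t) = mk (Suc L) xs t"
  unfolding mk_def by (auto simp: ex_le_Suc ex_gr_Suc)

lemma mk_True_0: "mk L (True#xs) 0 = (\<exists>t\<le>length xs. E xs t < 0)"
  unfolding mk_def
proof -
  have "(\<exists>t'. 0 < t' \<and> t' \<le> Suc (length xs) \<and> E (True#xs) t' \<le> 0) = (\<exists>s. s \<le> length xs \<and> E (True#xs) (Suc s) \<le> 0)"
    by (metis Suc_le_mono gr0_implies_Suc zero_less_Suc)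
  then show "(if (True # xs) ! 0 then \<exists>t'>0. t' \<le> length (True # xs) \<and> E (True # xs) t' \<le> E (True # xs) 0
     else (\<exists>t'\<le>0. E (True # xs) t' < E (True # xs) 0) \<or> - int L < E (True # xs) 0) = (\<exists>t\<le>length xs. E xs t < 0)"
    by auto force
qed

lemma mk_False_Suc: "mk L (False#xs) (Suc t) = mk (L - 1) xs t"
  unfolding mk_def by (auto simp: ex_le_Suc ex_gr_Suc)

lemma mk_False_0: "mk L (False#xs) 0 = (0 < L)"
  unfolding mk_def by auto

lemma Ex_less_Suc': "(\<exists>r<Suc L. P r) = (P 0 \<or> (\<exists>r<L. P (Suc r)))"
  using Ex_less_Suc2 by blast

definition STP :: "nat list \<Rightarrow> bool list \<Rightarrow> nat \<Rightarrow> bool" where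
  "STP st xs q = (\<exists>r<length st. q = st!r \<and> (\<exists>t\<le>length xs. E xs t < - int r))"

lemma split_range: "(i \<le> q \<and> q < i + Suc n \<and> P (q - i)) = (q = i \<and> P 0 \<or> Suc i \<le> q \<and> q < Suc i + n \<and> P (Suc (q - Suc i)))"
  by (cases "q = i") (auto simp: Suc_diff_Suc)

lemma exT: "(\<exists>t\<le>Suc n. E (True#xs) t < - int r) = (\<exists>t\<le>n. E xs t < - int (Suc r))"
  unfolding ex_le_Suc E_Cons_Suc by (auto; force)
lemma exF: "(\<exists>t\<le>Suc n. E (False#xs) t < - int (Suc r)) = (\<exists>t\<le>n. E xs t < - int r)"
  unfolding ex_le_Suc E_Cons_Suc by (auto; force)
lemma exF0: "(\<exists>t\<le>Suc n. E (False#xs) t < - int 0)"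
  by (rule exI[of _ 1]) simp

lemma marks_mem: "q \<in> marks st i xs \<longleftrightarrow>
   (i \<le> q \<and> q < i + length xs \<and> mk (length st) xs (q - i)) \<or> STP st xs q"
proof (induction st i xs arbitrary: q rule: marks.induct)
  case (1 st i)
  then show ?case by (simp add: STP_def)
next
  case (2 st i xs)
  have s1: "STP (i#st) xs q = (q = i \<and> (\<exists>t\<le>length xs. E xs t < 0) \<or> STP st (True#xs) q)"
    unfolding STP_def length_Cons Ex_less_Suc' exT by simp
  have "q \<in> marks st i (True#xs) = (q \<in> marks (i#st) (Suc i) xs)" by simp
  also have "\<dots> = ((Suc i \<le> q \<and> q < Suc i + length xs \<and> mk (Suc (length st)) xs (q - Suc i)) \<or> STP (i#st) xs q)"
    using 2[of q] by simp
  also have "\<dots> = ((i \<le> q \<and> q < i + length (True#xs) \<and> mk (length st) (True#xs) (q - i)) \<or> STP st (True#xs) q)"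
    unfolding s1 length_Cons split_range mk_True_Suc mk_True_0 by auto
  finally show ?case .
next
  case (3 i xs)
  have "q \<in> marks [] i (False#xs) = (q \<in> marks [] (Suc i) xs)" by simp
  also have "\<dots> = ((Suc i \<le> q \<and> q < Suc i + length xs \<and> mk 0 xs (q - Suc i)) \<or> STP [] xs q)"
    using 3[of q] by simp
  also have "\<dots> = ((i \<le> q \<and> q < i + length (False#xs) \<and> mk (length []) (False#xs) (q - i)) \<or> STP [] (False#xs) q)"
    unfolding length_Cons split_range mk_False_Suc mk_False_0 by (auto simp: STP_def)
  finally show ?case .
next
  case (4 j st i xs)
  have s1: "STP (j#st) (False#xs) q = (q = j \<or> STP st xs q)"
    unfolding STP_def length_Cons Ex_less_Suc' exF using exF0 by simp
  have "q \<in> marks (j#st) i (False#xs) = (q = i \<or> q = j \<or> q \<in> marks st (Suc i) xs)" by simp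
  also have "\<dots> = (q = i \<or> q = j \<or> (Suc i \<le> q \<and> q < Suc i + length xs \<and> mk (length st) xs (q - Suc i)) \<or> STP st xs q)"
    using 4[of q] by simp
  also have "\<dots> = ((i \<le> q \<and> q < i + length (False#xs) \<and> mk (length (j#st)) (False#xs) (q - i)) \<or> STP (j#st) (False#xs) q)"
    unfolding s1 length_Cons split_range mk_False_Suc mk_False_0 by auto
  finally show ?case .
qed




definition um0 :: "bool list \<Rightarrow> nat \<Rightarrow> bool" where
  "um0 x q = (q < length x \<and> \<not> x!q \<and> (\<forall>t\<le>q. E x q \<le> E x t))"
definition um1 :: "bool list \<Rightarrow> nat \<Rightarrow> bool" where
  "um1 x q = (q < length x \<and> x!q \<and> (\<forall>t. q < t \<and> t \<le> length x \<longrightarrow> E x q < E x t))"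

lemma marked_iff: "q \<in> marked x \<longleftrightarrow> q < length x \<and> \<not> um0 x q \<and> \<not> um1 x q"
proof -
  have "q \<in> marked x \<longleftrightarrow> q < length x \<and> mk 0 x q"
    unfolding marked_def marks_mem by (simp add: STP_def)
  moreover have "mk 0 x q = (\<not> um0 x q \<and> \<not> um1 x q)" if "q < length x"
    using that unfolding mk_def um0_def um1_def
    by (auto intro: exI[of _ 0])
  ultimately show ?thesis by blast
qed

lemma E_SucT: "x!t \<Longrightarrow> E x (Suc t) = E x t + 1" by (simp add: E_Suc)
lemma E_SucF: "\<not> x!t \<Longrightarrow> E x (Suc t) = E x t - 1" by (simp add: E_Suc)

lemma marked_less: "q \<in> marked x \<Longrightarrow> q < length x" by (simp add: marked_iff)
lemma finite_marked[simp]: "finite (marked x)"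
  by (rule finite_subset[of _ "{..<length x}"]) (auto dest: marked_less)

lemma unmarked_mono:
  assumes "u < v" "v < length x" "u \<notin> marked x" "v \<notin> marked x" "x!u"
  shows "x!v"
proof (rule ccontr)
  assume nv: "\<not> x!v"
  have "um1 x u" using assms marked_iff by (auto simp: um0_def)
  moreover have "um0 x v" using assms nv marked_iff by (auto simp: um1_def)
  ultimately show False using assms unfolding um0_def um1_def
    by (metis less_imp_le_nat not_le order.strict_trans2)
qed

definition cz :: "bool list \<Rightarrow> nat \<Rightarrow> nat" where
  "cz x t = card {u. u < t \<and> um0 x u}"

lemma cz_Suc: "cz x (Suc t) = cz x t + (if um0 x t then 1 else 0)"
proof -
  have "{u. u < Suc t \<and> um0 x u} = {u. u < t \<and> um0 x u} \<union> (if um0 x t then {t} else {})"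
    by (auto simp: less_Suc_eq)
  then show ?thesis unfolding cz_def by (simp add: card_insert_if)
qed

lemma U0: "t \<le> length x \<Longrightarrow> (\<forall>s\<le>t. - int (cz x t) \<le> E x s) \<and> (\<exists>s\<le>t. E x s = - int (cz x t))"
proof (induction t)
  case 0
  then show ?case by (simp add: cz_def)
next
  case (Suc t)
  then have IH: "\<forall>s\<le>t. - int (cz x t) \<le> E x s" "\<exists>s\<le>t. E x s = - int (cz x t)" and tl: "t < length x" by auto
  show ?case
  proof (cases "um0 x t")
    case True
    then have nx: "\<not> x!t" and mn: "\<forall>s\<le>t. E x t \<le> E x s" by (auto simp: um0_def)
    obtain s where s: "s\<le>t" "E x s = - int (cz x t)" using IH(2) by blast
    have "E x t \<le> E x s" using mn s(1) by blast
    moreover have "- int (cz x t) \<le> E x t" using IH(1) by simp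
    ultimately have Et: "E x t = - int (cz x t)" using s(2) by simp
    have ES: "E x (Suc t) = - int (cz x (Suc t))" using Et nx True by (simp add: E_SucF cz_Suc)
    have "\<forall>s\<le>Suc t. - int (cz x (Suc t)) \<le> E x s"
      using IH ES True by (auto simp: cz_Suc le_Suc_eq)
    with ES show ?thesis by auto
  next
    case False
    then have cc: "cz x (Suc t) = cz x t" by (simp add: cz_Suc)
    have "- int (cz x t) \<le> E x (Suc t)"
    proof (cases "x!t")
      case True
      have "- int (cz x t) \<le> E x t" using IH(1) by simp
      then show ?thesis using True by (simp add: E_SucT)
    next
      case nx: False
      with False tl obtain s where "s \<le> t" "E x s < E x t" by (auto simp: um0_def not_le)
      then show ?thesis using IH nx by (simp add: E_SucF) (smt (verit))
    qed
    then show ?thesis using IH cc by (auto simp: le_Suc_eq)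
  qed
qed

definition co :: "bool list \<Rightarrow> nat \<Rightarrow> nat" where
  "co x t = card {u. t \<le> u \<and> u < length x \<and> um1 x u}"

lemma co_step: "t < length x \<Longrightarrow> co x t = co x (Suc t) + (if um1 x t then 1 else 0)"
proof -
  assume "t < length x"
  have "{u. t \<le> u \<and> u < length x \<and> um1 x u} = {u. Suc t \<le> u \<and> u < length x \<and> um1 x u} \<union> (if um1 x t then {t} else {})"
    using \<open>t < length x\<close> by (auto simp: Suc_le_eq le_less dest: um1_def[THEN iffD1])
  then show ?thesis unfolding co_def by (simp add: card_insert_if)
qed

lemma U1: "t \<le> length x \<Longrightarrow> (\<forall>s. t \<le> s \<and> s \<le> length x \<longrightarrow> E x (length x) - int (co x t) \<le> E x s)
   \<and> (\<exists>s. t \<le> s \<and> s \<le> length x \<and> E x s = E x (length x) - int (co x t))"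
proof (induction t rule: inc_induct)
  case base
  have "co x (length x) = 0" by (simp add: co_def)
  then show ?case by auto
next
  case (step t)
  define m where "m = E x (length x) - int (co x (Suc t))"
  from step have IH: "\<forall>s. Suc t \<le> s \<and> s \<le> length x \<longrightarrow> m \<le> E x s" "\<exists>s. Suc t \<le> s \<and> s \<le> length x \<and> E x s = m"
    by (auto simp: m_def)
  show ?case
  proof (cases "um1 x t")
    case True
    then have xt: "x!t" and mn: "\<forall>s. t < s \<and> s \<le> length x \<longrightarrow> E x t < E x s" by (auto simp: um1_def)
    have c: "co x t = co x (Suc t) + 1" using co_step[OF step(2)] True by simp
    have "E x t < m" using IH(2) mn by force
    moreover have "E x (Suc t) \<ge> m" using IH(1) step(2) by simp
    ultimately have Et: "E x t = m - 1" using xt by (simp add: E_SucT)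
    have "\<forall>s. t \<le> s \<and> s \<le> length x \<longrightarrow> m - 1 \<le> E x s"
      using IH(1) Et by (smt (verit, ccfv_SIG) Suc_leI le_eq_less_or_eq)
    then show ?thesis using Et c step(2) by (auto simp: m_def intro!: exI[of _ t])
  next
    case False
    have c: "co x t = co x (Suc t)" using co_step[OF step(2)] False by simp
    have "m \<le> E x t"
    proof (cases "x!t")
      case xt: True
      with False step(2) obtain s where "t < s" "s \<le> length x" "E x s \<le> E x t" by (auto simp: um1_def not_less)
      then show ?thesis using IH(1) by (smt (verit, ccfv_SIG) Suc_leI)
    next
      case False
      have "m \<le> E x (Suc t)" using IH(1) step(2) by simp
      then show ?thesis using False by (simp add: E_SucF)
    qed
    then show ?thesis using IH c unfolding m_def
      by (metis Suc_leD le_eq_less_or_eq Suc_leI)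
  qed
qed

lemma E_count: "E x t = int (card {q. q < t \<and> x!q}) - int (card {q. q < t \<and> \<not> x!q})"
proof (induction t)
  case 0 then show ?case by simp
next
  case (Suc t)
  have a: "{q. q < Suc t \<and> x!q} = {q. q < t \<and> x!q} \<union> (if x!t then {t} else {})" by (auto simp: less_Suc_eq)
  have b: "{q. q < Suc t \<and> \<not> x!q} = {q. q < t \<and> \<not> x!q} \<union> (if x!t then {} else {t})" by (auto simp: less_Suc_eq)
  show ?case using Suc by (simp add: a b E_Suc card_insert_if)
qed

lemma card_marked: "card (marked x) = 2 * card {q \<in> marked x. x!q}"
proof -
  define n where "n = length x"
  have u0: "\<forall>s\<le>n. - int (cz x n) \<le> E x s" "\<exists>s\<le>n. E x s = - int (cz x n)"
    using U0[of n x] by (auto simp: n_def)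
  have u1: "\<forall>s. s \<le> n \<longrightarrow> E x n - int (co x 0) \<le> E x s" "\<exists>s. s \<le> n \<and> E x s = E x n - int (co x 0)"
    using U1[of 0 x] by (auto simp: n_def)
  have mins: "- int (cz x n) = E x n - int (co x 0)"
    using u0 u1 by (smt (verit))
  have o: "{q. q < n \<and> x!q} = {q\<in>marked x. x!q} \<union> {u. 0 \<le> u \<and> u < n \<and> um1 x u}"
    by (auto simp: marked_iff n_def um0_def dest: um1_def[THEN iffD1])
  have ocard: "card {q. q < n \<and> x!q} = card {q\<in>marked x. x!q} + co x 0"
    unfolding o by (subst card_Un_disjoint) (auto simp: marked_iff co_def n_def)
  have z: "{q. q < n \<and> \<not> x!q} = {q\<in>marked x. \<not> x!q} \<union> {u. u < n \<and> um0 x u}"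
    by (auto simp: marked_iff n_def um1_def dest: um0_def[THEN iffD1])
  have zcard: "card {q. q < n \<and> \<not> x!q} = card {q\<in>marked x. \<not> x!q} + cz x n"
    unfolding z by (subst card_Un_disjoint) (auto simp: marked_iff cz_def n_def)
  have mcard: "card (marked x) = card {q\<in>marked x. x!q} + card {q\<in>marked x. \<not> x!q}"
  proof -
    have "marked x = {q\<in>marked x. x!q} \<union> {q\<in>marked x. \<not> x!q}" by auto
    then show ?thesis by (metis (no_types, lifting) card_Un_disjoint disjoint_iff finite_marked finite_subset mem_Collect_eq subsetI)
  qed
  show ?thesis using E_count[of x n] mins ocard zcard mcard by simp
qed




definition sdiff :: "bool list \<Rightarrow> bool list \<Rightarrow> nat set" where
  "sdiff a b = {q. q < length a \<and> signature a ! q \<noteq> signature b ! q}"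

locale flip =
  fixes x y :: "bool list" and p n :: nat
  assumes lx: "length x = n" and ly: "length y = n" and pn: "p < n"
    and xp: "\<not> x!p" and yp: "y!p" and eq: "\<And>q. q < n \<Longrightarrow> q \<noteq> p \<Longrightarrow> x!q = y!q"
begin

lemma Ey: "t \<le> n \<Longrightarrow> E y t = E x t + (if p < t then 2 else 0)"
proof (induction t)
  case 0 then show ?case by simp
next
  case (Suc t)
  then have "t < n" by simp
  show ?case
  proof (cases "t = p")
    case True
    then show ?thesis using Suc xp yp by (simp add: E_Suc)
  next
    case False
    then show ?thesis using Suc eq[OF \<open>t<n\<close> False] by (auto simp: E_Suc)
  qed
qed

lemma Ey_le: "t \<le> p \<Longrightarrow> E y t = E x t" using Ey pn by simp
lemma Ey_gt: "p < t \<Longrightarrow> t \<le> n \<Longrightarrow> E y t = E x t + 2" using Ey by simp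

lemma same0: assumes "q < p" "\<not> x!q" shows "(q \<in> marked x) = (q \<in> marked y)"
proof -
  have yq: "\<not> y!q" using assms eq[of q] pn by auto
  have "um0 x q = um0 y q" unfolding um0_def using assms yq lx ly pn Ey_le by auto
  then show ?thesis using assms yq lx ly pn by (auto simp: marked_iff um1_def)
qed

lemma same1: assumes "p < q" "q < n" "x!q" shows "(q \<in> marked x) = (q \<in> marked y)"
proof -
  have yq: "y!q" using assms eq[of q] pn by auto
  have "um1 x q = um1 y q" unfolding um1_def using assms yq lx ly Ey_gt by auto
  then show ?thesis using assms yq lx ly pn by (auto simp: marked_iff um0_def)
qed

lemma diffA: assumes "p < q" "q < n" "\<not> x!q" "(q \<in> marked x) \<noteq> (q \<in> marked y)"
  shows "um0 x q \<and> \<not> um0 y q \<and> (\<exists>t\<le>p. E x t \<le> E x q + 1)"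
proof -
  have yq: "\<not> y!q" using assms eq[of q] pn by auto
  have u0: "um0 x q \<noteq> um0 y q" using assms yq lx ly by (auto simp: marked_iff um1_def)
  have "um0 y q \<Longrightarrow> um0 x q"
    unfolding um0_def using assms yq lx ly Ey_gt Ey_le
    by (smt (verit, ccfv_threshold) le_less_trans linorder_not_le order.strict_implies_order)
  then have ux: "um0 x q" and uy: "\<not> um0 y q" using u0 by auto
  then obtain t where t: "t \<le> q" "E y t < E y q" using assms yq ly by (auto simp: um0_def not_le)
  have "t \<le> p"
  proof (rule ccontr)
    assume "\<not> t \<le> p"
    then have "E x t < E x q" using t Ey_gt assms by simp
    then show False using ux t by (auto simp: um0_def)
  qed
  then have "E x t \<le> E x q + 1" using t Ey_le Ey_gt assms by simp
  with ux uy \<open>t \<le> p\<close> show ?thesis by blast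
qed

lemma diffB: assumes "q < p" "x!q" "(q \<in> marked x) \<noteq> (q \<in> marked y)"
  shows "um1 y q \<and> \<not> um1 x q \<and> (\<exists>t. p < t \<and> t \<le> n \<and> E x t \<le> E x q)"
proof -
  have yq: "y!q" using assms eq[of q] pn by auto
  have u1: "um1 x q \<noteq> um1 y q" using assms yq lx ly pn by (auto simp: marked_iff um0_def)
  have "um1 x q \<Longrightarrow> um1 y q"
    unfolding um1_def using assms yq lx ly Ey Ey_le
    by (smt (verit, best) less_imp_le_nat)
  then have ux: "\<not> um1 x q" and uy: "um1 y q" using u1 by auto
  then obtain t where t: "q < t" "t \<le> n" "E x t \<le> E x q" using assms yq lx pn by (auto simp: um1_def not_less)
  have "p < t"
  proof (rule ccontr)
    assume "\<not> p < t"
    then have "E y t \<le> E y q" using t Ey_le assms by simp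
    then show False using uy t ly by (auto simp: um1_def)
  qed
  with ux uy t show ?thesis by blast
qed

lemma card_int_interval: "finite S \<Longrightarrow> inj_on f S \<Longrightarrow> f ` S \<subseteq> {a..b::int} \<Longrightarrow> int (card S) \<le> max 0 (b - a + 1)"
proof -
  assume "finite S" "inj_on f S" "f ` S \<subseteq> {a..b}"
  then have "card S \<le> card {a..b}" by (metis card_image card_mono finite_atLeastAtMost_int)
  then show ?thesis by simp
qed

definition M where "M = Min (E x ` {..p})"
definition m where "m = Min (E x ` {p<..n})"

lemma M_le: "t \<le> p \<Longrightarrow> M \<le> E x t" unfolding M_def by simp
lemma M_at: "\<exists>t\<le>p. E x t = M"
proof -
  have "M \<in> E x ` {..p}" unfolding M_def by (intro Min_in) auto
  then show ?thesis by auto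
qed
lemma m_le: "p < t \<Longrightarrow> t \<le> n \<Longrightarrow> m \<le> E x t" unfolding m_def by simp
lemma m_at: "\<exists>t. p < t \<and> t \<le> n \<and> E x t = m"
proof -
  have "{p<..n} \<noteq> {}" using pn by auto
  then have "m \<in> E x ` {p<..n}" unfolding m_def by (intro Min_in) auto
  then show ?thesis by auto
qed

end

lemma sig_nth: "q < length x \<Longrightarrow> signature x ! q = (if q \<in> marked x then Some (x!q) else None)"
  by (simp add: signature_def)

context flip begin

lemma sdiff_sub: "sdiff x y \<subseteq> insert p ({q. p<q \<and> q<n \<and> \<not> x!q \<and> (q \<in> marked x) \<noteq> (q \<in> marked y)} \<union>
     {q. q<p \<and> x!q \<and> (q \<in> marked x) \<noteq> (q \<in> marked y)})"
proof
  fix q assume q: "q \<in> sdiff x y"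
  then have qn: "q < n" and d: "signature x ! q \<noteq> signature y ! q" by (auto simp: sdiff_def lx)
  show "q \<in> insert p ({q. p<q \<and> q<n \<and> \<not> x!q \<and> (q \<in> marked x) \<noteq> (q \<in> marked y)} \<union>
     {q. q<p \<and> x!q \<and> (q \<in> marked x) \<noteq> (q \<in> marked y)})"
  proof (cases "q = p")
    case False
    then have xq: "x!q = y!q" using eq qn by simp
    then have dm: "(q \<in> marked x) \<noteq> (q \<in> marked y)" using d qn lx ly by (cases "q \<in> marked x"; cases "q \<in> marked y") (auto simp: sig_nth)
    then show ?thesis using same0 same1 False qn by (cases "q < p") auto
  qed simp
qed

lemma sig_card: "card (sdiff x y) \<le> 3"
proof -
  define A where "A = {q. p<q \<and> q<n \<and> \<not> x!q \<and> (q \<in> marked x) \<noteq> (q \<in> marked y)}"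
  define B where "B = {q. q<p \<and> x!q \<and> (q \<in> marked x) \<noteq> (q \<in> marked y)}"
  have fA: "finite A" unfolding A_def by (rule finite_subset[of _ "{..<n}"]) auto
  have fB: "finite B" unfolding B_def by (rule finite_subset[of _ "{..<p}"]) auto
  obtain t0 where t0: "t0 \<le> p" "E x t0 = M" using M_at by blast
  obtain t1 where t1: "p < t1" "t1 \<le> n" "E x t1 = m" using m_at by blast
  have cA: "int (card A) \<le> max 0 (M - max (M-1) (m+1) + 1)"
  proof (rule card_int_interval[OF fA, of "E x"])
    show "inj_on (E x) A"
    proof (rule inj_onI)
      fix q q' assume qA: "q \<in> A" and qA': "q' \<in> A" and e: "E x q = E x q'"
      have "\<And>a b. a \<in> A \<Longrightarrow> b \<in> A \<Longrightarrow> a < b \<Longrightarrow> E x b < E x a"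
      proof -
        fix a b assume a: "a \<in> A" and b: "b \<in> A" and ab: "a < b"
        have "um0 x b" using b diffA unfolding A_def by blast
        then have "E x b \<le> E x (Suc a)" using ab by (simp add: um0_def)
        then show "E x b < E x a" using a unfolding A_def by (simp add: E_SucF)
      qed
      then show "q = q'" using qA qA' e by (metis less_irrefl linorder_neqE_nat)
    qed
    show "E x ` A \<subseteq> {max (M-1) (m+1)..M}"
    proof
      fix v assume "v \<in> E x ` A"
      then obtain q where q: "q \<in> A" "v = E x q" by blast
      then have pq: "p < q" "q < n" "\<not> x!q" unfolding A_def by auto
      have d: "um0 x q \<and> \<not> um0 y q \<and> (\<exists>t\<le>p. E x t \<le> E x q + 1)" using q diffA unfolding A_def by blast
      have "t0 \<le> q" using t0 pq by simp
      moreover have "um0 x q" using d by blast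
      ultimately have "E x q \<le> E x t0" unfolding um0_def by blast
      then have "E x q \<le> M" using t0 by simp
      moreover have "M - 1 \<le> E x q" using d M_le by force
      moreover have "m \<le> E x (Suc q)" using pq by (intro m_le) auto
      ultimately show "v \<in> {max (M-1) (m+1)..M}" using q pq by (simp add: E_SucF)
    qed
  qed
  have cB: "int (card B) \<le> max 0 (min (m+1) (E x p - 1) - max m M + 1)"
  proof (rule card_int_interval[OF fB, of "E x"])
    show "inj_on (E x) B"
    proof (rule inj_onI)
      fix q q' assume qB: "q \<in> B" and qB': "q' \<in> B" and e: "E x q = E x q'"
      have "\<And>a b. a \<in> B \<Longrightarrow> b \<in> B \<Longrightarrow> a < b \<Longrightarrow> E x a < E x b"
      proof -
        fix a b assume a: "a \<in> B" and b: "b \<in> B" and ab: "a < b"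
        have "um1 y a" using a diffB unfolding B_def by blast
        then have "E y a < E y b" using ab b pn ly unfolding B_def um1_def by auto
        then show "E x a < E x b" using a b Ey_le unfolding B_def by simp
      qed
      then show "q = q'" using qB qB' e by (metis less_irrefl linorder_neqE_nat)
    qed
    show "E x ` B \<subseteq> {max m M..min (m+1) (E x p - 1)}"
    proof
      fix v assume "v \<in> E x ` B"
      then obtain q where q: "q \<in> B" "v = E x q" by blast
      then have pq: "q < p" "x!q" unfolding B_def by auto
      have d: "um1 y q \<and> \<not> um1 x q \<and> (\<exists>t. p < t \<and> t \<le> n \<and> E x t \<le> E x q)" using q diffB unfolding B_def by blast
      then have "m \<le> E x q" using m_le by force
      moreover have "M \<le> E x q" using pq M_le by simp
      moreover have "E y q < E y t1" using d t1 pq ly by (simp add: um1_def)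
      moreover have "E y q < E y p" using d pq pn ly by (simp add: um1_def)
      ultimately show "v \<in> {max m M..min (m+1) (E x p - 1)}" using q pq t1 Ey_le Ey_gt by simp
    qed
  qed
  have "card (sdiff x y) \<le> card (insert p (A \<union> B))"
    using sdiff_sub fA fB unfolding A_def B_def by (intro card_mono) auto
  also have "\<dots> \<le> Suc (card (A \<union> B))" by (simp add: card_insert_if fA fB)
  also have "\<dots> \<le> Suc (card A + card B)" using card_Un_le[of A B] by simp
  finally have "int (card (sdiff x y)) \<le> 1 + int (card A) + int (card B)" by simp
  moreover have "max 0 (M - max (M-1) (m+1) + 1) + max 0 (min (m+1) (E x p - 1) - max m M + 1) \<le> 2"
    by (smt (verit))
  ultimately show ?thesis using cA cB by linarith
qed


lemma SF: assumes u: "um0 x p" and last: "\<And>q. p < q \<Longrightarrow> \<not> um0 x q"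
  shows "marked x = marked y"
proof -
  have Ep: "\<And>s. s \<le> p \<Longrightarrow> E x p \<le> E x s" using u by (simp add: um0_def)
  have bound: "\<And>t. p < t \<Longrightarrow> t \<le> n \<Longrightarrow> E x p - 1 \<le> E x t"
  proof (rule ccontr)
    fix t0 assume "p < t0" "t0 \<le> n" "\<not> E x p - 1 \<le> E x t0"
    then have "\<exists>t. p < t \<and> t \<le> n \<and> E x t \<le> E x p - 2" by (intro exI[of _ t0]) simp
    then obtain t where t: "p < t" "t \<le> n" "E x t \<le> E x p - 2"
      and least: "\<And>s. s < t \<Longrightarrow> \<not> (p < s \<and> s \<le> n \<and> E x s \<le> E x p - 2)"
      using exists_least_iff[of "\<lambda>t. p < t \<and> t \<le> n \<and> E x t \<le> E x p - 2"] by blast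
    have "E x (Suc p) = E x p - 1" using xp by (simp add: E_SucF)
    then have "t \<noteq> Suc p" using t by auto
    then obtain r where r: "t = Suc r" "p < r" using t(1) by (cases t) auto
    have Er: "E x r > E x p - 2" using least[of r] r t by auto
    have "E x t \<ge> E x r - 1" using r by (simp add: E_Suc)
    then have xr: "\<not> x!r" and Er': "E x r = E x p - 1" using Er t(3) r(1) E_Suc[of x r] by (auto split: if_splits)
    have "um0 x r"
      unfolding um0_def
    proof (intro conjI allI impI)
      show "r < length x" using r t lx by simp
      show "\<not> x!r" by (rule xr)
      fix s assume "s \<le> r"
      show "E x r \<le> E x s"
      proof (cases "s \<le> p")
        case True then show ?thesis using Ep[OF True] Er' by simp
      next
        case False
        have "s < t" using \<open>s \<le> r\<close> r by simp
        then have "\<not> (E x s \<le> E x p - 2)" using least[of s] False t by simp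
        then show ?thesis using Er' by simp
      qed
    qed
    then show False using last r by blast
  qed
  have "um1 y p" unfolding um1_def
  proof (intro conjI allI impI)
    show "p < length y" using pn ly by simp
    show "y!p" by (rule yp)
    fix t assume "p < t \<and> t \<le> length y"
    then show "E y p < E y t" using Ey_le[of p] Ey_gt[of t] bound[of t] ly by simp
  qed
  then have py: "p \<notin> marked y" by (simp add: marked_iff)
  have px: "p \<notin> marked x" using u by (simp add: marked_iff)
  show ?thesis
  proof (rule set_eqI)
    fix q show "q \<in> marked x \<longleftrightarrow> q \<in> marked y"
    proof (cases "q < n")
      case False then show ?thesis using lx ly by (auto dest: marked_less)
    next
      case qn: True
      show ?thesis
      proof (rule ccontr)
        assume d: "(q \<in> marked x) \<noteq> (q \<in> marked y)"
        then have "q \<noteq> p" using px py by auto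
        show False
        proof (cases "q < p")
          case True
          then have "x!q" using same0 d by blast
          then have "um1 y q" using diffB True d by blast
          then have "E y q < E y p" using True pn ly by (simp add: um1_def)
          then have "E x q < E x p" using True Ey_le by simp
          then show False using Ep[of q] True by simp
        next
          case False
          then have pq: "p < q" using \<open>q \<noteq> p\<close> by simp
          then have "\<not> x!q" using same1 d qn by blast
          then have "um0 x q" using diffA pq qn d by blast
          then show False using last pq by blast
        qed
      qed
    qed
  qed
qed

lemma SF': assumes u: "um1 y p" and first: "\<And>q. q < p \<Longrightarrow> \<not> um1 y q"
  shows "marked x = marked y"
proof -
  have Ep: "\<And>s. p < s \<Longrightarrow> s \<le> n \<Longrightarrow> E x p - 1 \<le> E x s"
  proof -
    fix s assume "p < s" "s \<le> n"
    then have "E y p < E y s" using u ly by (simp add: um1_def)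
    then show "E x p - 1 \<le> E x s" using \<open>p < s\<close> \<open>s \<le> n\<close> Ey_gt Ey_le by simp
  qed
  have "um0 x p"
  proof (rule ccontr)
    assume "\<not> um0 x p"
    then have "\<not> (\<forall>t\<le>p. E x p \<le> E x t)" using xp pn lx unfolding um0_def by blast
    then obtain t0 where "t0 \<le> p" "E x t0 < E x p" by (auto simp: not_le)
    then have ne: "{t. t \<le> p \<and> E x t < E x p} \<noteq> {}" by auto
    define t where "t = Max {t. t \<le> p \<and> E x t < E x p}"
    have fin: "finite {t. t \<le> p \<and> E x t < E x p}" by (rule finite_subset[of _ "{..p}"]) auto
    have t: "t \<le> p" "E x t < E x p" using Max_in[OF fin ne] unfolding t_def by auto
    have great: "\<And>s. t < s \<Longrightarrow> s \<le> p \<Longrightarrow> E x p \<le> E x s"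
    proof (rule ccontr)
      fix s assume s: "t < s" "s \<le> p" "\<not> E x p \<le> E x s"
      then have "s \<in> {t. t \<le> p \<and> E x t < E x p}" by simp
      then have "s \<le> t" unfolding t_def using Max_ge[OF fin] by blast
      with s show False by simp
    qed
    have tp: "t < p" using t by (cases "t = p") auto
    have "E x p \<le> E x (Suc t)" using great[of "Suc t"] tp by simp
    then have xt: "x!t" and Et: "E x t = E x p - 1" using t by (auto simp: E_Suc split: if_splits)
    have "um1 y t" unfolding um1_def
    proof (intro conjI allI impI)
      show "t < length y" using tp pn ly by simp
      show "y!t" using xt eq[of t] tp pn by simp
      fix s assume s: "t < s \<and> s \<le> length y"
      show "E y t < E y s"
      proof (cases "s \<le> p")
        case True then show ?thesis using great[of s] s Et tp Ey_le by simp
      next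
        case False then show ?thesis using Ep[of s] s Et tp Ey_le Ey_gt ly by simp
      qed
    qed
    then show False using first tp by blast
  qed
  then have px: "p \<notin> marked x" by (simp add: marked_iff)
  have py: "p \<notin> marked y" using u by (simp add: marked_iff)
  show ?thesis
  proof (rule set_eqI)
    fix q show "q \<in> marked x \<longleftrightarrow> q \<in> marked y"
    proof (cases "q < n")
      case False then show ?thesis using lx ly by (auto dest: marked_less)
    next
      case qn: True
      show ?thesis
      proof (rule ccontr)
        assume d: "(q \<in> marked x) \<noteq> (q \<in> marked y)"
        then have "q \<noteq> p" using px py by auto
        show False
        proof (cases "q < p")
          case True
          then have "x!q" using same0 d by blast
          then have "um1 y q" using diffB True d by blast
          then show False using first True by blast
        next
          case False
          then have pq: "p < q" using \<open>q \<noteq> p\<close> by simp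
          then have nq: "\<not> x!q" using same1 d qn by blast
          then have "um0 x q" using diffA pq qn d by blast
          then have "E x q \<le> E x (Suc p)" using pq by (simp add: um0_def)
          moreover have "E x p - 1 \<le> E x (Suc q)" using Ep[of "Suc q"] pq qn by simp
          ultimately show False using nq xp by (simp add: E_SucF)
        qed
      qed
    qed
  qed
qed

end




lemma um0_iff: "um0 x q \<longleftrightarrow> q < length x \<and> q \<notin> marked x \<and> \<not> x!q"
  using marked_iff[of q x] by (auto simp: um0_def um1_def)
lemma um1_iff: "um1 x q \<longleftrightarrow> q < length x \<and> q \<notin> marked x \<and> x!q"
  using marked_iff[of q x] by (auto simp: um0_def um1_def)

lemma weight_card: "weight x = card {i. i < length x \<and> x!i}"
  unfolding weight_def by (simp add: length_filter_conv_card)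

lemma flip_upd: "p < length x \<Longrightarrow> \<not> x!p \<Longrightarrow> flip x (x[p := True]) p (length x)"
  by unfold_locales auto
lemma flip_upd': "p < length x \<Longrightarrow> x!p \<Longrightarrow> flip (x[p := False]) x p (length x)"
  by unfold_locales auto

lemma up: "d \<le> card {q. q < length x \<and> q \<notin> marked x \<and> \<not> x!q} \<Longrightarrow>
  \<exists>c. length c = length x \<and> marked c = marked x \<and> (\<forall>q\<in>marked x. c!q = x!q) \<and> weight c = weight x + d"
proof (induction d arbitrary: x)
  case 0 show ?case by (intro exI[of _ x]) simp
next
  case (Suc d)
  define Z where "Z = {q. q < length x \<and> q \<notin> marked x \<and> \<not> x!q}"
  have fin: "finite Z" unfolding Z_def by (rule finite_subset[of _ "{..<length x}"]) auto
  have ne: "Z \<noteq> {}" using Suc.prems unfolding Z_def[symmetric] by (metis card.empty not_less_eq_eq zero_le)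
  define p where "p = Max Z"
  have pZ: "p \<in> Z" unfolding p_def using Max_in[OF fin ne] .
  then have pn: "p < length x" and pm: "p \<notin> marked x" and xp: "\<not> x!p" unfolding Z_def by auto
  have big: "\<And>q. q \<in> Z \<Longrightarrow> q \<le> p" unfolding p_def using Max_ge[OF fin] by blast
  define y where "y = x[p := True]"
  interpret f: flip x y p "length x" unfolding y_def using flip_upd[OF pn xp] .
  have "um0 x p" using pn pm xp by (simp add: um0_iff)
  moreover have "\<And>q. p < q \<Longrightarrow> \<not> um0 x q"
  proof
    fix q assume "p < q" "um0 x q"
    then have "q \<in> Z" unfolding Z_def by (simp add: um0_iff)
    then show False using big \<open>p < q\<close> by force
  qed
  ultimately have my: "marked x = marked y" by (rule f.SF)
  have ly: "length y = length x" unfolding y_def by simp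
  have Zy: "{q. q < length y \<and> q \<notin> marked y \<and> \<not> y!q} = Z - {p}"
    unfolding Z_def my[symmetric] unfolding y_def using pn by (auto simp: nth_list_update split: if_splits)
  have "card (Z - {p}) = card Z - 1" using pZ fin by simp
  then have "d \<le> card {q. q < length y \<and> q \<notin> marked y \<and> \<not> y!q}" using Suc.prems Zy unfolding Z_def by simp
  from Suc.IH[OF this] obtain c where c: "length c = length y" "marked c = marked y" "\<forall>q\<in>marked y. c!q = y!q" "weight c = weight y + d" by blast
  have wy: "weight y = Suc (weight x)"
  proof -
    have "{i. i < length y \<and> y!i} = insert p {i. i < length x \<and> x!i}" unfolding y_def using pn by (auto simp: nth_list_update)
    moreover have "p \<notin> {i. i < length x \<and> x!i}" using xp by simp
    ultimately show ?thesis unfolding weight_card by (simp add: ly)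
  qed
  have "\<forall>q\<in>marked x. c!q = x!q" using c(3) my[symmetric] pm pn unfolding y_def by (auto simp: nth_list_update)
  then show ?case using c my ly wy by auto
qed

lemma down: "d \<le> card {q. q < length x \<and> q \<notin> marked x \<and> x!q} \<Longrightarrow>
  \<exists>c. length c = length x \<and> marked c = marked x \<and> (\<forall>q\<in>marked x. c!q = x!q) \<and> weight c + d = weight x"
proof (induction d arbitrary: x)
  case 0 show ?case by (intro exI[of _ x]) simp
next
  case (Suc d)
  define Z where "Z = {q. q < length x \<and> q \<notin> marked x \<and> x!q}"
  have fin: "finite Z" unfolding Z_def by (rule finite_subset[of _ "{..<length x}"]) auto
  have ne: "Z \<noteq> {}" using Suc.prems unfolding Z_def[symmetric] by (metis card.empty not_less_eq_eq zero_le)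
  define p where "p = Min Z"
  have pZ: "p \<in> Z" unfolding p_def using Min_in[OF fin ne] .
  then have pn: "p < length x" and pm: "p \<notin> marked x" and xp: "x!p" unfolding Z_def by auto
  have small: "\<And>q. q \<in> Z \<Longrightarrow> p \<le> q" unfolding p_def using Min_le[OF fin] by blast
  define y where "y = x[p := False]"
  interpret f: flip y x p "length x" unfolding y_def using flip_upd'[OF pn xp] .
  have "um1 x p" using pn pm xp by (simp add: um1_iff)
  moreover have "\<And>q. q < p \<Longrightarrow> \<not> um1 x q"
  proof
    fix q assume "q < p" "um1 x q"
    then have "q \<in> Z" unfolding Z_def by (simp add: um1_iff)
    then show False using small \<open>q < p\<close> by force
  qed
  ultimately have my: "marked y = marked x" by (rule f.SF')
  have ly: "length y = length x" unfolding y_def by simp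
  have Zy: "{q. q < length y \<and> q \<notin> marked y \<and> y!q} = Z - {p}"
    unfolding Z_def my unfolding y_def using pn by (auto simp: nth_list_update split: if_splits)
  have "card (Z - {p}) = card Z - 1" using pZ fin by simp
  then have "d \<le> card {q. q < length y \<and> q \<notin> marked y \<and> y!q}" using Suc.prems Zy unfolding Z_def by simp
  from Suc.IH[OF this] obtain c where c: "length c = length y" "marked c = marked y" "\<forall>q\<in>marked y. c!q = y!q" "weight c + d = weight y" by blast
  have wy: "Suc (weight y) = weight x"
  proof -
    have "{i. i < length x \<and> x!i} = insert p {i. i < length y \<and> y!i}" unfolding y_def using pn xp by (auto simp: nth_list_update)
    moreover have "p \<notin> {i. i < length y \<and> y!i}" unfolding y_def using pn by simp
    ultimately show ?thesis unfolding weight_card by (simp add: ly)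
  qed
  have "\<forall>q\<in>marked x. c!q = x!q" using c(3) my pm pn unfolding y_def by (auto simp: nth_list_update)
  then show ?case using c my ly wy by auto
qed




lemma mono_lt:
  fixes W :: "nat set"
  assumes fin: "finite W"
    and mf: "\<And>u v. u \<in> W \<Longrightarrow> v \<in> W \<Longrightarrow> u < v \<Longrightarrow> f u \<Longrightarrow> f v"
    and mg: "\<And>u v. u \<in> W \<Longrightarrow> v \<in> W \<Longrightarrow> u < v \<Longrightarrow> g u \<Longrightarrow> g v"
    and u: "u \<in> W" "f u" "\<not> g u"
  shows "card {v\<in>W. g v} < card {v\<in>W. f v}"
proof -
  have s1: "{v\<in>W. g v} \<subseteq> {v\<in>W. u < v}"
  proof
    fix v assume v: "v \<in> {v\<in>W. g v}"
    have "\<not> v \<le> u"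
    proof
      assume "v \<le> u"
      then have "v < u \<or> v = u" by auto
      then show False using v u mg[of v u] by auto
    qed
    then show "v \<in> {v\<in>W. u < v}" using v by simp
  qed
  have s2: "{v\<in>W. u < v} \<subset> {v\<in>W. u \<le> v}" using u by auto
  have s3: "{v\<in>W. u \<le> v} \<subseteq> {v\<in>W. f v}"
  proof
    fix v assume v: "v \<in> {v\<in>W. u \<le> v}"
    then show "v \<in> {v\<in>W. f v}" using u mf[of u v] by (cases "v = u") auto
  qed
  have "card {v\<in>W. g v} \<le> card {v\<in>W. u < v}" using s1 fin by (intro card_mono) auto
  also have "\<dots> < card {v\<in>W. u \<le> v}" using s2 fin by (intro psubset_card_mono) auto
  also have "\<dots> \<le> card {v\<in>W. f v}" using s3 fin by (intro card_mono) auto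
  finally show ?thesis .
qed

lemma mono_diff:
  fixes W :: "nat set"
  assumes fin: "finite W"
    and mf: "\<And>u v. u \<in> W \<Longrightarrow> v \<in> W \<Longrightarrow> u < v \<Longrightarrow> f u \<Longrightarrow> f v"
    and mg: "\<And>u v. u \<in> W \<Longrightarrow> v \<in> W \<Longrightarrow> u < v \<Longrightarrow> g u \<Longrightarrow> g v"
    and le: "card {v\<in>W. g v} \<le> card {v\<in>W. f v}"
  shows "card {v\<in>W. f v \<noteq> g v} = card {v\<in>W. f v} - card {v\<in>W. g v}"
proof -
  have sub: "{v\<in>W. g v} \<subseteq> {v\<in>W. f v}"
  proof
    fix v assume v: "v \<in> {v\<in>W. g v}"
    show "v \<in> {v\<in>W. f v}"
    proof (rule ccontr)
      assume "v \<notin> {v\<in>W. f v}"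
      then have "card {v\<in>W. f v} < card {v\<in>W. g v}" using mono_lt[OF fin mg mf] v by auto
      with le show False by simp
    qed
  qed
  have "{v\<in>W. f v \<noteq> g v} = {v\<in>W. f v} - {v\<in>W. g v}" using sub by auto
  then show ?thesis using sub fin by (simp add: card_Diff_subset)
qed

definition U :: "bool list \<Rightarrow> nat set" where "U x = {q. q < length x \<and> q \<notin> marked x}"
definition hh :: "bool list \<Rightarrow> nat" where "hh x = card {q \<in> marked x. x!q}"

lemma finite_U[simp]: "finite (U x)" unfolding U_def by simp

lemma card_U: "card (U x) + 2 * hh x = length x"
proof -
  have "U x \<union> marked x = {..<length x}" unfolding U_def by (auto dest: marked_less)
  moreover have "U x \<inter> marked x = {}" unfolding U_def by auto
  ultimately have "card (U x) + card (marked x) = length x"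
    by (metis card_Un_disjoint card_lessThan finite_U finite_marked)
  then show ?thesis using card_marked[of x] unfolding hh_def by simp
qed

lemma chain_k_hh: "chain_k x = hh x" unfolding chain_k_def hh_def using card_marked[of x] by simp

lemma weight_split: assumes "length c = length x" "marked c = marked x" "\<forall>q\<in>marked x. c!q = x!q"
  shows "weight c = hh x + card {q \<in> U x. c!q}"
proof -
  have "{i. i < length c \<and> c!i} = {q \<in> marked x. x!q} \<union> {q \<in> U x. c!q}"
    using assms unfolding U_def by (auto dest: marked_less)
  moreover have "{q \<in> marked x. x!q} \<inter> {q \<in> U x. c!q} = {}" unfolding U_def by auto
  ultimately show ?thesis unfolding weight_card hh_def
    by (simp add: card_Un_disjoint)
qed

lemma in_chain: "length c = length x \<Longrightarrow> marked c = marked x \<Longrightarrow> \<forall>q\<in>marked x. c!q = x!q \<Longrightarrow> c \<in> chain x"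
  unfolding chain_def signature_def by auto

lemma chain_D: assumes "c \<in> chain x"
  shows "length c = length x \<and> marked c = marked x \<and> (\<forall>q\<in>marked x. c!q = x!q)"
proof -
  have l: "length c = length x" and s: "signature c = signature x" using assms unfolding chain_def by auto
  have "\<And>q. q < length x \<Longrightarrow> signature c ! q = signature x ! q" using s by simp
  then have e: "\<And>q. q < length x \<Longrightarrow> (if q \<in> marked c then Some (c!q) else None) = (if q \<in> marked x then Some (x!q) else None)"
    using l by (simp add: sig_nth)
  have mc: "marked c = marked x"
  proof (rule set_eqI)
    fix q show "q \<in> marked c \<longleftrightarrow> q \<in> marked x"
      using e[of q] l by (cases "q < length x") (auto dest: marked_less split: if_splits)
  qed
  moreover have "\<forall>q\<in>marked x. c!q = x!q"
  proof
    fix q assume q: "q \<in> marked x"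
    then have "q < length x" by (rule marked_less)
    then show "c!q = x!q" using e[of q] q mc by simp
  qed
  ultimately show ?thesis using l by simp
qed

lemma U_mono: "u \<in> U c \<Longrightarrow> v \<in> U c \<Longrightarrow> u < v \<Longrightarrow> c!u \<Longrightarrow> c!v"
  unfolding U_def using unmarked_mono by blast

lemma exists_elem: assumes "hh x \<le> j" "j \<le> length x - hh x"
  shows "\<exists>c. length c = length x \<and> marked c = marked x \<and> (\<forall>q\<in>marked x. c!q = x!q) \<and> weight c = j"
proof -
  define a where "a = card {q. q < length x \<and> q \<notin> marked x \<and> \<not> x!q}"
  define b where "b = card {q. q < length x \<and> q \<notin> marked x \<and> x!q}"
  have "U x = {q. q < length x \<and> q \<notin> marked x \<and> \<not> x!q} \<union> {q. q < length x \<and> q \<notin> marked x \<and> x!q}"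
    unfolding U_def by auto
  then have ab: "card (U x) = a + b" unfolding a_def b_def
    by (subst card_Un_disjoint[symmetric]) auto
  have wb: "weight x = hh x + b"
    using weight_split[of x x] unfolding b_def U_def by simp
  have cu: "card (U x) + 2 * hh x = length x" by (rule card_U)
  show ?thesis
  proof (cases "weight x \<le> j")
    case True
    have "j - weight x \<le> a" using True assms ab wb cu by linarith
    from up[OF this[unfolded a_def]] obtain c where
      "length c = length x \<and> marked c = marked x \<and> (\<forall>q\<in>marked x. c!q = x!q) \<and> weight c = weight x + (j - weight x)" by blast
    then show ?thesis using True by (intro exI[of _ c]) simp
  next
    case False
    have "weight x - j \<le> b" using False assms ab wb cu by linarith
    from down[OF this[unfolded b_def]] obtain c where c:
      "length c = length x" "marked c = marked x" "\<forall>q\<in>marked x. c!q = x!q" "weight c + (weight x - j) = weight x" by blast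
    have "weight c = j" using c(4) False by linarith
    then show ?thesis using c by (intro exI[of _ c]) simp
  qed
qed

lemma chain_elem_props: assumes "hh x \<le> j" "j \<le> length x - hh x"
  shows "length (chain_elem x j) = length x \<and> marked (chain_elem x j) = marked x
    \<and> (\<forall>q\<in>marked x. chain_elem x j ! q = x!q) \<and> hh x + card {q \<in> U x. chain_elem x j ! q} = j"
proof -
  obtain c where c: "length c = length x" "marked c = marked x" "\<forall>q\<in>marked x. c!q = x!q" "weight c = j"
    using exists_elem[OF assms] by blast
  have cc: "c \<in> chain x \<and> weight c = j" using in_chain[OF c(1-3)] c(4) by simp
  have uniq: "c' = c" if c': "c' \<in> chain x \<and> weight c' = j" for c'
  proof -
    have d: "length c' = length x" "marked c' = marked x" "\<forall>q\<in>marked x. c'!q = x!q" using chain_D[of c' x] c' by simp_all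
    have w1: "card {q \<in> U x. c'!q} = card {q \<in> U x. c!q}"
      using weight_split[OF d] weight_split[OF c(1-3)] c' c(4) by simp
    have Uc': "U c' = U x" unfolding U_def using d by simp
    have Uc: "U c = U x" unfolding U_def using c by simp
    have m1: "\<And>u v. u \<in> U x \<Longrightarrow> v \<in> U x \<Longrightarrow> u < v \<Longrightarrow> c'!u \<Longrightarrow> c'!v"
      using U_mono[where c=c'] unfolding Uc' by blast
    have m2: "\<And>u v. u \<in> U x \<Longrightarrow> v \<in> U x \<Longrightarrow> u < v \<Longrightarrow> c!u \<Longrightarrow> c!v"
      using U_mono[where c=c] unfolding Uc by blast
    have "\<forall>u\<in>U x. c'!u = c!u"
    proof (rule ccontr)
      assume "\<not> (\<forall>u\<in>U x. c'!u = c!u)"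
      then obtain u where u: "u \<in> U x" "c'!u \<noteq> c!u" by blast
      show False
      proof (cases "c'!u")
        case True
        then show ?thesis using mono_lt[where W="U x" and f="\<lambda>v. c'!v" and g="\<lambda>v. c!v" and u=u, OF finite_U m1 m2] u w1 by simp
      next
        case False
        then show ?thesis using mono_lt[where W="U x" and g="\<lambda>v. c'!v" and f="\<lambda>v. c!v" and u=u, OF finite_U m2 m1] u w1 by simp
      qed
    qed
    then show "c' = c"
    proof (intro nth_equalityI)
      show "length c' = length c" using d c by simp
      fix i assume "i < length c'"
      then show "c'!i = c!i" using d c \<open>\<forall>u\<in>U x. c'!u = c!u\<close> unfolding U_def by (cases "i \<in> marked x") auto
    qed
  qed
  have "chain_elem x j = c" unfolding chain_elem_def
  proof (rule the_equality)
    show "c \<in> chain x \<and> weight c = j" by (rule cc)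
    fix c' assume "c' \<in> chain x \<and> weight c' = j"
    then show "c' = c" by (rule uniq)
  qed
  then show ?thesis using c weight_split[OF c(1-3)] by simp
qed




lemma hdist_sig: "length x = length y \<Longrightarrow> hdist (signature x) (signature y) = card (sdiff x y)"
  unfolding hdist_def sdiff_def by (simp add: signature_def)

lemma sdiff_sym: "length x = length y \<Longrightarrow> sdiff x y = sdiff y x"
  unfolding sdiff_def by auto

lemma flip_of_hdist: assumes "length x = n" "length y = n" "hdist x y = 1"
  shows "\<exists>p. flip x y p n \<or> flip y x p n"
proof -
  have "card {i. i < length x \<and> i < length y \<and> x!i \<noteq> y!i} = 1" using assms(3) unfolding hdist_def .
  then obtain p where P: "{i. i < length x \<and> i < length y \<and> x!i \<noteq> y!i} = {p}" by (rule card_1_singletonE)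
  then have pn: "p < n" and d: "x!p \<noteq> y!p" using assms by auto
  have e: "\<And>q. q < n \<Longrightarrow> q \<noteq> p \<Longrightarrow> x!q = y!q"
  proof (rule ccontr)
    fix q assume "q < n" "q \<noteq> p" "x!q \<noteq> y!q"
    then have "q \<in> {i. i < length x \<and> i < length y \<and> x!i \<noteq> y!i}" using assms by simp
    then have "q \<in> {p}" unfolding P .
    then show False using \<open>q \<noteq> p\<close> by simp
  qed
  show ?thesis
  proof (cases "x!p")
    case True
    have "flip y x p n" apply unfold_locales using True d pn e assms by auto
    then show ?thesis by blast
  next
    case False
    have "flip x y p n" apply unfold_locales using False d pn e assms by auto
    then show ?thesis by blast
  qed
qed

lemma sdiff_le3: assumes "length x = n" "length y = n" "hdist x y = 1"
  shows "card (sdiff x y) \<le> 3"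
proof -
  obtain p where "flip x y p n \<or> flip y x p n" using flip_of_hdist[OF assms] by blast
  then show ?thesis
  proof
    assume "flip x y p n" then show ?thesis by (rule flip.sig_card)
  next
    assume "flip y x p n"
    then have "card (sdiff y x) \<le> 3" by (rule flip.sig_card)
    then show ?thesis using sdiff_sym[of x y] assms by simp
  qed
qed

lemma marked_sub: assumes "length x = length y" shows "marked x \<subseteq> marked y \<union> sdiff x y"
proof
  fix q assume q: "q \<in> marked x"
  then have qn: "q < length x" by (rule marked_less)
  show "q \<in> marked y \<union> sdiff x y"
  proof (cases "q \<in> marked y")
    case False
    then have "signature x ! q \<noteq> signature y ! q" using q qn assms by (simp add: sig_nth)
    then show ?thesis using qn unfolding sdiff_def by simp
  qed simp
qed

lemma card_marked_le: assumes "length x = length y" shows "card (marked x) \<le> card (marked y) + card (sdiff x y)"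
proof -
  have f: "finite (sdiff x y)" unfolding sdiff_def by simp
  have "card (marked x) \<le> card (marked y \<union> sdiff x y)" using marked_sub[OF assms] f by (intro card_mono) auto
  also have "\<dots> \<le> card (marked y) + card (sdiff x y)" by (rule card_Un_le)
  finally show ?thesis .
qed


lemma dist_bound:
  assumes lx: "length x = n" and ly: "length y = n" and S3: "card (sdiff x y) \<le> 3"
    and j: "hh x \<le> j" "j \<le> n - hh x" and j': "hh y \<le> j'" "j' \<le> n - hh y"
  shows "int (hdist (chain_elem x j) (chain_elem y j')) \<le> \<bar>int j - int j'\<bar> + 6"
proof -
  define c where "c = chain_elem x j"
  define c' where "c' = chain_elem y j'"
  have pc: "length c = n" "marked c = marked x" "\<forall>q\<in>marked x. c!q = x!q" "hh x + card {q \<in> U x. c!q} = j"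
    using chain_elem_props[of x j] j lx unfolding c_def by auto
  have pc': "length c' = n" "marked c' = marked y" "\<forall>q\<in>marked y. c'!q = y!q" "hh y + card {q \<in> U y. c'!q} = j'"
    using chain_elem_props[of y j'] j' ly unfolding c'_def by auto
  define S where "S = sdiff x y"
  define W where "W = U x \<inter> U y"
  define D where "D = {i. i < length c \<and> i < length c' \<and> c!i \<noteq> c'!i}"
  have fS: "finite S" unfolding S_def sdiff_def by simp
  have fW: "finite W" unfolding W_def by simp
  have DS: "D \<subseteq> S \<union> {q\<in>W. c!q \<noteq> c'!q}"
  proof
    fix q assume qD: "q \<in> D"
    then have qn: "q < n" and ne: "c!q \<noteq> c'!q" using pc pc' unfolding D_def by auto
    show "q \<in> S \<union> {q\<in>W. c!q \<noteq> c'!q}"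
    proof (cases "q \<in> S")
      case False
      then have sq: "signature x ! q = signature y ! q" using qn lx unfolding S_def sdiff_def by auto
      have "q \<notin> marked x"
      proof
        assume m: "q \<in> marked x"
        then have "q \<in> marked y" "x!q = y!q" using sq qn lx ly by (auto simp: sig_nth split: if_splits)
        then show False using m ne pc(3) pc'(3) by auto
      qed
      moreover have "q \<notin> marked y"
      proof
        assume "q \<in> marked y"
        then show False using sq qn lx ly \<open>q \<notin> marked x\<close> by (auto simp: sig_nth)
      qed
      ultimately show ?thesis using qn lx ly ne unfolding W_def U_def by auto
    qed simp
  qed
  have Uc: "U c = U x" unfolding U_def using pc lx by simp
  have Uc': "U c' = U y" unfolding U_def using pc' ly by simp
  have m1: "\<And>u v. u \<in> W \<Longrightarrow> v \<in> W \<Longrightarrow> u < v \<Longrightarrow> c!u \<Longrightarrow> c!v"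
    using U_mono[where c=c] unfolding Uc W_def by blast
  have m2: "\<And>u v. u \<in> W \<Longrightarrow> v \<in> W \<Longrightarrow> u < v \<Longrightarrow> c'!u \<Longrightarrow> c'!v"
    using U_mono[where c=c'] unfolding Uc' W_def by blast
  define a where "a = card {q\<in>W. c!q}"
  define a' where "a' = card {q\<in>W. c'!q}"
  have dW: "int (card {q\<in>W. c!q \<noteq> c'!q}) = \<bar>int a - int a'\<bar>"
  proof (cases "a' \<le> a")
    case True
    then show ?thesis using mono_diff[where W=W and f="\<lambda>q. c!q" and g="\<lambda>q. c'!q", OF fW m1 m2] unfolding a_def a'_def by simp
  next
    case False
    have "{q\<in>W. c!q \<noteq> c'!q} = {q\<in>W. c'!q \<noteq> c!q}" by auto
    then show ?thesis using False mono_diff[where W=W and g="\<lambda>q. c!q" and f="\<lambda>q. c'!q", OF fW m2 m1] unfolding a_def a'_def by simp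
  qed
  have "card D \<le> card (S \<union> {q\<in>W. c!q \<noteq> c'!q})" using DS fS fW by (intro card_mono) auto
  also have "\<dots> \<le> card S + card {q\<in>W. c!q \<noteq> c'!q}" by (rule card_Un_le)
  finally have cD: "int (card D) \<le> int (card S) + \<bar>int a - int a'\<bar>" using dW by linarith
  define P where "P = card (U x - U y)"
  define Q where "Q = card (U y - U x)"
  have splitx: "U x = W \<union> (U x - U y)" unfolding W_def by auto
  have splity: "U y = W \<union> (U y - U x)" unfolding W_def by auto
  have cUx: "card (U x) = card W + P" unfolding P_def using fW
    by (subst splitx, subst card_Un_disjoint) (auto simp: W_def)
  have cUy: "card (U y) = card W + Q" unfolding Q_def using fW
    by (subst splity, subst card_Un_disjoint) (auto simp: W_def)
  have ex: "card {q \<in> U x. c!q} = a + card {q \<in> U x - U y. c!q}"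
  proof -
    have e: "{q \<in> U x. c!q} = {q\<in>W. c!q} \<union> {q \<in> U x - U y. c!q}" unfolding W_def by auto
    have f1: "finite {q\<in>W. c!q}" using fW by simp
    have f2: "finite {q \<in> U x - U y. c!q}" by simp
    have dj: "{q\<in>W. c!q} \<inter> {q \<in> U x - U y. c!q} = {}" unfolding W_def by auto
    show ?thesis unfolding a_def e using card_Un_disjoint[OF f1 f2 dj] .
  qed
  have ey: "card {q \<in> U y. c'!q} = a' + card {q \<in> U y - U x. c'!q}"
  proof -
    have e: "{q \<in> U y. c'!q} = {q\<in>W. c'!q} \<union> {q \<in> U y - U x. c'!q}" unfolding W_def by auto
    have f1: "finite {q\<in>W. c'!q}" using fW by simp
    have f2: "finite {q \<in> U y - U x. c'!q}" by simp
    have dj: "{q\<in>W. c'!q} \<inter> {q \<in> U y - U x. c'!q} = {}" unfolding W_def by auto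
    show ?thesis unfolding a'_def e using card_Un_disjoint[OF f1 f2 dj] .
  qed
  have ePx: "card {q \<in> U x - U y. c!q} \<le> P" unfolding P_def by (intro card_mono) auto
  have ePy: "card {q \<in> U y - U x. c'!q} \<le> Q" unfolding Q_def by (intro card_mono) auto
  have PQ: "P + Q \<le> card S"
  proof -
    have sub: "(U x - U y) \<union> (U y - U x) \<subseteq> S"
    proof
      fix q assume q: "q \<in> (U x - U y) \<union> (U y - U x)"
      then have qn: "q < n" and "(q \<in> marked x) \<noteq> (q \<in> marked y)" using lx ly unfolding U_def by auto
      then have "signature x ! q \<noteq> signature y ! q" using lx ly by (auto simp: sig_nth)
      then show "q \<in> S" using qn lx unfolding S_def sdiff_def by simp
    qed
    have "P + Q = card ((U x - U y) \<union> (U y - U x))" unfolding P_def Q_def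
      by (subst card_Un_disjoint) auto
    also have "\<dots> \<le> card S" using sub fS by (rule card_mono[rotated])
    finally show ?thesis .
  qed
  have hx: "card (U x) + 2 * hh x = n" using card_U[of x] lx by simp
  have hy: "card (U y) + 2 * hh y = n" using card_U[of y] ly by simp
  have "hdist c c' = card D" unfolding hdist_def D_def ..
  moreover have "int (card D) \<le> \<bar>int j - int j'\<bar> + 6"
    using cD PQ hx hy cUx cUy ex ey ePx ePy pc(4) pc'(4) S3 unfolding S_def by linarith
  ultimately show ?thesis unfolding c_def c'_def by simp
qed

theorem mainTheorem2:
  fixes n :: nat and x y :: "bool list"
  assumes "length x = n" and "length y = n" and "hdist x y = 1"
  shows "hdist (signature x) (signature y) \<le> 3
    \<and> \<bar>int (chain_k x) - int (chain_k y)\<bar> \<le> 1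
    \<and> (\<forall>j \<in> {chain_k x .. n - chain_k x}. \<forall>j' \<in> {chain_k y .. n - chain_k y}.
          int (hdist (chain_elem x j) (chain_elem y j')) \<le> \<bar>int j - int j'\<bar> + 6)"
proof -
  have S3: "card (sdiff x y) \<le> 3" by (rule sdiff_le3[OF assms])
  have part1: "hdist (signature x) (signature y) \<le> 3" using S3 hdist_sig[of x y] assms by simp
  have c1: "card (marked x) \<le> card (marked y) + card (sdiff x y)" using card_marked_le[of x y] assms by simp
  have c2: "card (marked y) \<le> card (marked x) + card (sdiff x y)"
    using card_marked_le[of y x] sdiff_sym[of x y] assms by simp
  have part2: "\<bar>int (chain_k x) - int (chain_k y)\<bar> \<le> 1"
    using c1 c2 S3 card_marked[of x] card_marked[of y] unfolding chain_k_hh hh_def by linarith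
  have part3: "\<forall>j \<in> {chain_k x .. n - chain_k x}. \<forall>j' \<in> {chain_k y .. n - chain_k y}.
          int (hdist (chain_elem x j) (chain_elem y j')) \<le> \<bar>int j - int j'\<bar> + 6"
    using dist_bound[OF assms(1,2) S3] unfolding chain_k_hh by auto
  show ?thesis using part1 part2 part3 by blast
qed


end
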